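(* Fix $n \ge n_0$ where $n_0$ is a sufficiently large universal constant. Let $G$ be drawn uniformly at random from $\mathcal{G}_{2n}$. With probability at least $1 - \frac{1}{n}$, $G$ is $\beta$-balanced for $\beta = 8 n$.
   Context: Fix disjoint vertex sets $L,R$ with $|L|=|R|=n$ and a fixed perfect matching $M$ of directed edges from $L$ to $R$. $\mathcal{G}_{2n}$ is the set of all unweighted directed graphs on vertex set $L\cup R$ whose set of edges from $L$ to $R$ is exactly $M$, whose edges from $R$ to $L$ form an arbitrary subset of $R\times L$, and which have no other edges (equivalently, a uniform element includes each pair $(v,u)\in R\times L$ as an edge independently with probability $1/2$). An unweighted directed graph is $\beta$-balanced if it is strongly connected and for every $\varnothing\ne S\subsetneq V$ the number of edges leaving $S$ is at most $\beta$ times the number of edges entering $S$. *)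

theory Defs
  imports "HOL-Probability.Probability"
begin

type_synonym vert = "nat + nat"

definition Lside :: "nat \<Rightarrow> vert set" where "Lside n = Inl ` {..<n}"
definition Rside :: "nat \<Rightarrow> vert set" where "Rside n = Inr ` {..<n}"

definition matching :: "nat \<Rightarrow> (nat \<Rightarrow> nat) \<Rightarrow> (vert \<times> vert) set" where
  "matching n \<pi> = {(Inl i, Inr (\<pi> i)) | i. i < n}"

definition graph_of :: "nat \<Rightarrow> (nat \<Rightarrow> nat) \<Rightarrow> (vert \<times> vert) set \<Rightarrow> (vert \<times> vert) set" where
  "graph_of n \<pi> B = matching n \<pi> \<union> B"

definition strongly_connected :: "'a set \<Rightarrow> ('a \<times> 'a) set \<Rightarrow> bool" where
  "strongly_connected V E \<longleftrightarrow> (\<forall>u\<in>V. \<forall>v\<in>V. (u, v) \<in> (E \<inter> V \<times> V)\<^sup>*)"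

definition out_edges :: "'a set \<Rightarrow> ('a \<times> 'a) set \<Rightarrow> 'a set \<Rightarrow> ('a \<times> 'a) set" where
  "out_edges V E S = {(u, v) \<in> E. u \<in> S \<and> v \<in> V - S}"

definition in_edges :: "'a set \<Rightarrow> ('a \<times> 'a) set \<Rightarrow> 'a set \<Rightarrow> ('a \<times> 'a) set" where
  "in_edges V E S = {(u, v) \<in> E. u \<in> V - S \<and> v \<in> S}"

definition balanced :: "real \<Rightarrow> 'a set \<Rightarrow> ('a \<times> 'a) set \<Rightarrow> bool" where
  "balanced \<beta> V E \<longleftrightarrow> strongly_connected V E \<and>
     (\<forall>S. S \<noteq> {} \<and> S \<subset> V \<longrightarrow>
        real (card (out_edges V E S)) \<le> \<beta> * real (card (in_edges V E S)))"

end

theory Submission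
  imports Defs "HOL-Real_Asymp.Real_Asymp"
begin

lemma sum_Pow_card:
  assumes "finite A"
  shows "(\<Sum>X\<in>Pow A. f (card X)) = (\<Sum>k\<le>card A. of_nat (card A choose k) * f k)"
proof -
  have "(\<Sum>X\<in>Pow A. f (card X)) = (\<Sum>k\<le>card A. sum (\<lambda>X. f (card X)) {X \<in> Pow A. card X = k})"
    by (rule sum.group[symmetric]) (use assms in \<open>auto intro: card_mono\<close>)
  also have "\<dots> = (\<Sum>k\<le>card A. of_nat (card A choose k) * f k)"
  proof (rule sum.cong[OF refl])
    fix k assume "k \<in> {..card A}"
    have "sum (\<lambda>X. f (card X)) {X \<in> Pow A. card X = k} = sum (\<lambda>X. f k) {X \<in> Pow A. card X = k}"
      by (rule sum.cong) auto
    also have "\<dots> = of_nat (card {X \<in> Pow A. card X = k}) * f k" by simp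
    also have "{X \<in> Pow A. card X = k} = {B. B \<subseteq> A \<and> card B = k}" by auto
    finally show "sum (\<lambda>X. f (card X)) {X \<in> Pow A. card X = k} = of_nat (card A choose k) * f k"
      using n_subsets[OF assms] by simp
  qed
  finally show ?thesis .
qed

definition cnd :: "nat \<Rightarrow> nat \<Rightarrow> nat \<Rightarrow> bool" where
  "cnd n x y \<longleftrightarrow> 1 \<le> x \<and> 1 \<le> y \<and> n \<le> x + y + min x y"

lemma term_bound_aux:
  fixes n x y :: nat
  assumes "x \<le> y" "1 \<le> x" "n \<le> x + y + x" "y \<le> n" "real n ^ 3 \<le> 2 ^ (n div 3)"
  shows "real (n choose x) * real (n choose y) * (1/2) ^ (x*y) \<le> real n ^ 3 / 2 ^ (n div 3)"
proof -
  have n1: "n \<ge> 1" using assms by linarith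
  have c1: "real (n choose x) \<le> real n ^ x" using binomial_le_pow[of x n] assms
    by (metis of_nat_le_iff of_nat_power order.trans le_add2 le_trans)
  have "n choose y = n choose (n - y)" using binomial_symmetric[OF assms(4)] .
  also have "\<dots> \<le> n ^ (n - y)" by (rule binomial_le_pow) simp
  also have "\<dots> \<le> n ^ (2*x)" by (rule power_increasing) (use assms n1 in auto)
  finally have c2: "real (n choose y) \<le> real n ^ (2*x)" by (metis of_nat_le_iff of_nat_power)
  have ky: "n div 3 \<le> y" using assms by linarith
  have p: "(1/2::real) ^ (x*y) \<le> (1/2) ^ (x * (n div 3))"
    by (rule power_decreasing) (use ky in auto)
  have "real (n choose x) * real (n choose y) * (1/2) ^ (x*y) \<le> real n ^ x * real n ^ (2*x) * (1/2) ^ (x * (n div 3))"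
    by (intro mult_mono c1 c2 p) auto
  also have "\<dots> = (real n ^ 3 / 2 ^ (n div 3)) ^ x"
    by (simp add: power_add[symmetric] power_mult[symmetric] power_divide power_mult_distrib mult.commute mult_2 power_one_over)
  also have "\<dots> \<le> (real n ^ 3 / 2 ^ (n div 3)) ^ 1"
    by (rule power_decreasing) (use assms in auto)
  finally show ?thesis by simp
qed

lemma term_bound:
  fixes n x y :: nat
  assumes "x \<le> n" "y \<le> n" "real n ^ 3 \<le> 2 ^ (n div 3)"
  shows "real (n choose x) * (real (n choose y) * (if cnd n x y then (1/2) ^ (x*y) else 0)) \<le> real n ^ 3 / 2 ^ (n div 3)"
proof (cases "cnd n x y")
  case False thus ?thesis by simp
next
  case True
  show ?thesis
  proof (cases "x \<le> y")
    case True
    with \<open>cnd n x y\<close> have "n \<le> x + y + x" "1 \<le> x" by (auto simp: cnd_def)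
    with term_bound_aux[OF True _ _ assms(2,3)] \<open>cnd n x y\<close> show ?thesis by (simp add: mult.assoc)
  next
    case False
    with \<open>cnd n x y\<close> have "n \<le> y + x + y" "1 \<le> y" "y \<le> x" by (auto simp: cnd_def)
    with term_bound_aux[of y x n] assms \<open>cnd n x y\<close> show ?thesis by (simp add: mult_ac)
  qed
qed

lemma total_bound:
  fixes n :: nat
  assumes "real n ^ 3 \<le> 2 ^ (n div 3)"
  shows "(\<Sum>X\<in>Pow {..<n}. \<Sum>Y\<in>Pow {..<n}. (if cnd n (card X) (card Y) then (1/2::real) ^ (card X * card Y) else 0))
     \<le> real (n+1)^2 * (real n ^ 3 / 2 ^ (n div 3))"
proof -
  have "(\<Sum>X\<in>Pow {..<n}. \<Sum>Y\<in>Pow {..<n}. (if cnd n (card X) (card Y) then (1/2::real) ^ (card X * card Y) else 0))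
     = (\<Sum>x\<le>n. real (n choose x) * (\<Sum>y\<le>n. real (n choose y) * (if cnd n x y then (1/2) ^ (x*y) else 0)))"
  proof -
    have i: "\<And>X. (\<Sum>Y\<in>Pow {..<n}. (if cnd n (card X) (card Y) then (1/2::real) ^ (card X * card Y) else 0))
       = (\<Sum>y\<le>n. real (n choose y) * (if cnd n (card X) y then (1/2) ^ (card X*y) else 0))"
      using sum_Pow_card[where A="{..<n}" and f="\<lambda>y. (if cnd n (card X) y then (1/2::real) ^ (card X*y) else 0)" for X] by simp
    show ?thesis unfolding i
      using sum_Pow_card[where A="{..<n}" and f="\<lambda>x. (\<Sum>y\<le>n. real (n choose y) * (if cnd n x y then (1/2::real) ^ (x*y) else 0))"] by simp
  qed
  also have "\<dots> = (\<Sum>x\<le>n. \<Sum>y\<le>n. real (n choose x) * (real (n choose y) * (if cnd n x y then (1/2) ^ (x*y) else 0)))"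
    by (simp add: sum_distrib_left)
  also have "\<dots> \<le> (\<Sum>x\<le>n. \<Sum>y\<le>n. real n ^ 3 / 2 ^ (n div 3))"
    by (intro sum_mono term_bound assms) auto
  also have "\<dots> = real (n+1)^2 * (real n ^ 3 / 2 ^ (n div 3))"
    by (simp add: power2_eq_square)
  finally show ?thesis .
qed

lemma eventually_big:
  "eventually (\<lambda>n::nat. real ((n+1)^6) \<le> 2 powr (real n / 3 - 1)) at_top"
  by real_asymp

lemma big_n:
  assumes "real ((n+1)^6) \<le> 2 powr (real n / 3 - 1)" "n \<ge> 1"
  shows "real n ^ 3 \<le> 2 ^ (n div 3)" "real (n+1)^2 * (real n ^ 3 / 2 ^ (n div 3)) \<le> 1 / real n"
proof -
  have "real n / 3 - 1 \<le> real (n div 3)" by linarith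
  hence "2 powr (real n / 3 - 1) \<le> 2 powr real (n div 3)" by (intro powr_mono) auto
  also have "\<dots> = 2 ^ (n div 3)" by (simp add: powr_realpow)
  finally have A: "real ((n+1)^6) \<le> 2 ^ (n div 3)" using assms by linarith
  have B0: "n ^ 3 \<le> (n+1)^6"
  proof -
    have "n ^ 3 \<le> (n+1)^3" by (intro power_mono) auto
    also have "\<dots> \<le> (n+1)^6" by (intro power_increasing) auto
    finally show ?thesis .
  qed
  have B: "real n ^ 3 \<le> real ((n+1)^6)"
    using B0 unfolding of_nat_le_iff[symmetric, where 'a=real] by (simp only: of_nat_power)
  show "real n ^ 3 \<le> 2 ^ (n div 3)" using A B by linarith
  have C0: "n * ((n+1)^2 * n^3) \<le> (n+1)^6"
  proof -
    have "n * ((n+1)^2 * n^3) \<le> (n+1) * ((n+1)^2 * (n+1)^3)" by (intro mult_mono power_mono) auto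
    also have "\<dots> = (n+1)^(1+2+3)" by (simp only: power_add power_one_right mult.assoc)
    also have "(1+2+3::nat) = 6" by simp
    finally show ?thesis .
  qed
  have C: "real n * (real (n+1)^2 * real n ^ 3) \<le> real ((n+1)^6)"
    using C0 unfolding of_nat_le_iff[symmetric, where 'a=real] by (simp only: of_nat_power of_nat_mult)
  have pos: "(0::real) < 2 ^ (n div 3)" "real n > 0" using assms by auto
  show "real (n+1)^2 * (real n ^ 3 / 2 ^ (n div 3)) \<le> 1 / real n"
  proof -
    let ?k = "2 ^ (n div 3) :: real"
    have "real n * (real (n+1)^2 * real n ^ 3) \<le> ?k" by (rule order.trans[OF C A])
    hence "real (n+1)^2 * real n ^ 3 \<le> ?k / real n" using pos by (simp add: le_divide_eq mult.commute)
    hence "real (n+1)^2 * real n ^ 3 / ?k \<le> 1 / real n" using pos by (simp add: divide_le_eq)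
    thus ?thesis by simp
  qed
qed


definition good :: "nat \<Rightarrow> (vert \<times> vert) set \<Rightarrow> bool" where
  "good n B \<longleftrightarrow> (\<forall>X Y. X \<subseteq> {..<n} \<longrightarrow> Y \<subseteq> {..<n} \<longrightarrow> cnd n (card X) (card Y)
      \<longrightarrow> B \<inter> (Inr ` X \<times> Inl ` Y) \<noteq> {})"

lemma ecount:
  assumes g: "good n B" and XY: "X \<subseteq> {..<n}" "Y \<subseteq> {..<n}" "X \<noteq> {}" "Y \<noteq> {}"
    and nD: "n \<le> card X + card Y + D"
  shows "min (card X) (card Y) \<le> 2 * card (B \<inter> (Inr ` X \<times> Inl ` Y)) + D"
proof -
  define Z where "Z = B \<inter> (Inr ` X \<times> Inl ` Y)"
  have fX: "finite X" and fY: "finite Y" using XY finite_subset by auto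
  have fZ: "finite Z" unfolding Z_def using fX fY by auto
  have cX: "card X \<ge> 1" "card Y \<ge> 1" using fX fY XY by (auto simp: Suc_le_eq card_gt_0_iff)
  show ?thesis
  proof (cases "card X \<le> card Y")
    case True
    define X0 where "X0 = {j \<in> X. \<forall>i\<in>Y. (Inr j, Inl i) \<notin> B}"
    have sub: "X0 \<subseteq> X" unfolding X0_def by auto
    have "(Inr ` (X - X0) :: vert set) \<subseteq> fst ` Z"
    proof
      fix u :: vert assume "u \<in> Inr ` (X - X0)"
      then obtain j where j: "u = Inr j" "j \<in> X" "j \<notin> X0" by auto
      then obtain i where "i \<in> Y" "(Inr j, Inl i) \<in> B" unfolding X0_def by auto
      hence "(Inr j, Inl i) \<in> Z" unfolding Z_def using j by auto
      thus "u \<in> fst ` Z" using j by force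
    qed
    hence "card (Inr ` (X - X0) :: vert set) \<le> card (fst ` Z)" by (rule card_mono[OF finite_imageI[OF fZ]])
    also have "\<dots> \<le> card Z" by (rule card_image_le[OF fZ])
    finally have e1: "card (X - X0) \<le> card Z" by (simp add: card_image)
    have e2: "card (X - X0) = card X - card X0" using card_Diff_subset[OF _ sub] finite_subset[OF sub fX] by simp
    have c0: "card X0 \<le> card X" using card_mono[OF fX sub] .
    show ?thesis
    proof (cases "X0 = {}")
      case True
      thus ?thesis using e1 e2 unfolding Z_def by simp
    next
      case False
      have "B \<inter> (Inr ` X0 \<times> Inl ` Y) = {}" unfolding X0_def by auto
      hence "\<not> cnd n (card X0) (card Y)" using g sub XY unfolding good_def by blast
      moreover have "card X0 \<ge> 1" using False finite_subset[OF sub fX] by (auto simp: Suc_le_eq card_gt_0_iff)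
      ultimately have "card X0 + card Y + card X0 < n" using c0 True cX unfolding cnd_def by auto
      thus ?thesis using e1 e2 c0 True nD unfolding Z_def by linarith
    qed
  next
    case False
    define Y0 where "Y0 = {i \<in> Y. \<forall>j\<in>X. (Inr j, Inl i) \<notin> B}"
    have sub: "Y0 \<subseteq> Y" unfolding Y0_def by auto
    have "(Inl ` (Y - Y0) :: vert set) \<subseteq> snd ` Z"
    proof
      fix u :: vert assume "u \<in> Inl ` (Y - Y0)"
      then obtain i where i: "u = Inl i" "i \<in> Y" "i \<notin> Y0" by auto
      then obtain j where "j \<in> X" "(Inr j, Inl i) \<in> B" unfolding Y0_def by auto
      hence "(Inr j, Inl i) \<in> Z" unfolding Z_def using i by auto
      thus "u \<in> snd ` Z" using i by force
    qed
    hence "card (Inl ` (Y - Y0) :: vert set) \<le> card (snd ` Z)" by (rule card_mono[OF finite_imageI[OF fZ]])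
    also have "\<dots> \<le> card Z" by (rule card_image_le[OF fZ])
    finally have e1: "card (Y - Y0) \<le> card Z" by (simp add: card_image)
    have e2: "card (Y - Y0) = card Y - card Y0" using card_Diff_subset[OF _ sub] finite_subset[OF sub fY] by simp
    have c0: "card Y0 \<le> card Y" using card_mono[OF fY sub] .
    show ?thesis
    proof (cases "Y0 = {}")
      case True
      thus ?thesis using e1 e2 False unfolding Z_def by simp
    next
      case F2: False
      have "B \<inter> (Inr ` X \<times> Inl ` Y0) = {}" unfolding Y0_def by auto
      hence "\<not> cnd n (card X) (card Y0)" using g sub XY unfolding good_def by blast
      moreover have "card Y0 \<ge> 1" using F2 finite_subset[OF sub fY] by (auto simp: Suc_le_eq card_gt_0_iff)
      ultimately have "card X + card Y0 + card Y0 < n" using c0 False cX unfolding cnd_def by auto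
      thus ?thesis using e1 e2 c0 False nD unfolding Z_def by linarith
    qed
  qed
qed

lemma sc_from_in:
  assumes "\<And>S. S \<noteq> {} \<Longrightarrow> S \<subset> V \<Longrightarrow> in_edges V E S \<noteq> {}"
  shows "strongly_connected V E"
  unfolding strongly_connected_def
proof (intro ballI)
  fix u v assume uv: "u \<in> V" "v \<in> V"
  define T where "T = {w \<in> V. (w, v) \<in> (E \<inter> V \<times> V)\<^sup>*}"
  have vT: "v \<in> T" unfolding T_def using uv by auto
  show "(u, v) \<in> (E \<inter> V \<times> V)\<^sup>*"
  proof (rule ccontr)
    assume "(u, v) \<notin> (E \<inter> V \<times> V)\<^sup>*"
    hence "u \<notin> T" unfolding T_def by auto
    hence "T \<subset> V" using uv unfolding T_def by auto
    with vT assms obtain w z where wz: "(w, z) \<in> E" "w \<in> V - T" "z \<in> T"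
      unfolding in_edges_def by blast
    hence "(w, v) \<in> (E \<inter> V \<times> V)\<^sup>*"
      unfolding T_def by (auto intro: converse_rtrancl_into_rtrancl)
    thus False using wz unfolding T_def by auto
  qed
qed

lemma arith1:
  fixes a b n :: nat
  assumes "a \<le> n" "b \<le> n"
  shows "a + b * (n - a) \<le> n * (1 + min b (n - a))"
proof (cases "b \<le> n - a")
  case True
  have 1: "b * (n - a) \<le> n * b" by (simp add: mult.commute)
  have 2: "n * (1 + min b (n - a)) = n + n * b" using True by (simp add: min_def)
  show ?thesis unfolding 2 using 1 assms(1) by linarith
next
  case False
  have "b * (n - a) \<le> n * (n - a)" by (intro mult_le_mono) (use assms in auto)
  moreover have "n * (1 + min b (n - a)) = n + n * (n - a)" using False by (simp add: min_def)
  ultimately show ?thesis using assms by linarith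
qed

lemma arith2:
  fixes a b n i e :: nat
  assumes "a \<le> n" "b \<le> n" "\<not> (a = 0 \<and> b = 0)" "\<not> (a = n \<and> b = n)" "b - a \<le> i" "e \<le> i"
    "1 \<le> a \<Longrightarrow> b < n \<Longrightarrow> min (n - b) a \<le> 2 * e + (b - a)"
  shows "1 \<le> i \<and> 1 + min b (n - a) \<le> 5 * i"
proof (cases "a = 0")
  case True thus ?thesis using assms by auto
next
  case False
  show ?thesis
  proof (cases "b = n")
    case True thus ?thesis using assms False by auto
  next
    case F2: False
    define m where "m = min (n - b) a"
    define d where "d = b - a"
    define k where "k = min b (n - a)"
    have m: "m \<le> 2 * e + d" using F2 False assms unfolding m_def d_def by auto
    have m1: "1 \<le> m" using F2 False assms unfolding m_def by auto
    have "k \<le> m + d" using assms unfolding m_def d_def k_def by (auto simp: min_def)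
    moreover have "d \<le> i" using assms unfolding d_def by auto
    ultimately have "1 \<le> i \<and> 1 + k \<le> 5 * i" using m m1 assms by linarith
    thus ?thesis unfolding k_def .
  qed
qed


lemma cut_bound:
  assumes bij: "bij_betw \<pi> {..<n} {..<n}" and BU: "B \<subseteq> Rside n \<times> Lside n" and g: "good n B"
    and S: "S \<noteq> {}" "S \<subset> Lside n \<union> Rside n"
  shows "1 \<le> card (in_edges (Lside n \<union> Rside n) (graph_of n \<pi> B) S) \<and>
         card (out_edges (Lside n \<union> Rside n) (graph_of n \<pi> B) S) \<le> n * (5 * card (in_edges (Lside n \<union> Rside n) (graph_of n \<pi> B) S))"
proof -
  define V where "V = Lside n \<union> Rside n"
  define E where "E = graph_of n \<pi> B"
  define SL where "SL = {i \<in> {..<n}. Inl i \<in> S}"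
  define SR where "SR = {j \<in> {..<n}. Inr j \<in> S}"
  define a where "a = card SL"
  define b where "b = card SR"
  define I where "I = in_edges V E S"
  define Ou where "Ou = out_edges V E S"
  have fV: "finite V" unfolding V_def Lside_def Rside_def by auto
  have fB: "finite B" using BU finite_subset unfolding Lside_def Rside_def by blast
  have fM: "finite (matching n \<pi>)" unfolding matching_def
  proof -
    have "{(Inl i, Inr (\<pi> i)) | i. i < n} = (\<lambda>i. (Inl i, Inr (\<pi> i))) ` {..<n}" by auto
    thus "finite {(Inl i, Inr (\<pi> i)) :: vert \<times> vert | i. i < n}" by simp
  qed
  have fE: "finite E" unfolding E_def graph_of_def using fM fB by simp
  have fI: "finite I" unfolding I_def in_edges_def using fE by (auto intro: finite_subset)
  have fO: "finite Ou" unfolding Ou_def out_edges_def using fE by (auto intro: finite_subset)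
  have SV: "S \<subseteq> V" using S unfolding V_def by auto
  have aN: "a \<le> n" unfolding a_def SL_def using card_mono[of "{..<n}" "{i \<in> {..<n}. Inl i \<in> S}"] by auto
  have bN: "b \<le> n" unfolding b_def SR_def using card_mono[of "{..<n}" "{i \<in> {..<n}. Inr i \<in> S}"] by auto
  have fSL: "finite SL" "finite SR" unfolding SL_def SR_def by auto
  have Ssub: "S \<subseteq> Inl ` SL \<union> Inr ` SR"
    using SV unfolding V_def Lside_def Rside_def SL_def SR_def by auto
  have nz: "\<not> (a = 0 \<and> b = 0)"
  proof
    assume "a = 0 \<and> b = 0"
    hence "SL = {}" "SR = {}" using fSL unfolding a_def b_def by auto
    thus False using Ssub S by auto
  qed
  have nf: "\<not> (a = n \<and> b = n)"
  proof
    assume ab: "a = n \<and> b = n"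
    have "SL = {..<n}" by (rule card_subset_eq) (use ab in \<open>auto simp: a_def SL_def\<close>)
    moreover have "SR = {..<n}" by (rule card_subset_eq) (use ab in \<open>auto simp: b_def SR_def\<close>)
    ultimately have "V \<subseteq> S" unfolding V_def Lside_def Rside_def SL_def SR_def by auto
    thus False using S unfolding V_def by auto
  qed
  define P where "P = {i \<in> {..<n}. \<pi> i \<in> SR}"
  have cP: "card P = b"
  proof -
    have "\<pi> ` P = SR"
    proof
      show "\<pi> ` P \<subseteq> SR" unfolding P_def by auto
      show "SR \<subseteq> \<pi> ` P"
      proof
        fix j assume j: "j \<in> SR"
        hence "j \<in> \<pi> ` {..<n}" using bij unfolding bij_betw_def SR_def by auto
        then obtain i where "i < n" "j = \<pi> i" by auto
        thus "j \<in> \<pi> ` P" using j unfolding P_def by auto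
      qed
    qed
    moreover have "inj_on \<pi> P" using bij unfolding bij_betw_def P_def by (auto intro: inj_on_subset)
    ultimately show ?thesis unfolding b_def by (metis card_image)
  qed
  define Q where "Q = {i \<in> {..<n}. i \<notin> SL \<and> \<pi> i \<in> SR}"
  have "P - SL \<subseteq> Q" unfolding P_def Q_def by auto
  hence "card (P - SL) \<le> card Q" by (intro card_mono) (auto simp: Q_def)
  moreover have "card P - card SL \<le> card (P - SL)" by (rule diff_card_le_card_Diff[OF fSL(1)])
  ultimately have cQ: "b - a \<le> card Q" using cP unfolding a_def by linarith
  define IM where "IM = (\<lambda>i. (Inl i :: vert, Inr (\<pi> i) :: vert)) ` Q"
  have "card IM = card Q" unfolding IM_def by (rule card_image) (auto simp: inj_on_def)
  moreover have "IM \<subseteq> I"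
    unfolding IM_def I_def in_edges_def E_def graph_of_def matching_def Q_def V_def Lside_def Rside_def SL_def SR_def
    by auto
  ultimately have i1: "b - a \<le> card I" using cQ card_mono[OF fI, of IM] by linarith
  define X where "X = {..<n} - SR"
  define e where "e = card (B \<inter> (Inr ` X \<times> Inl ` SL))"
  have "B \<inter> (Inr ` X \<times> Inl ` SL) \<subseteq> I"
    unfolding I_def in_edges_def E_def graph_of_def X_def V_def Lside_def Rside_def SL_def SR_def
    by auto
  hence i2: "e \<le> card I" unfolding e_def using card_mono[OF fI] by blast
  have i3: "min (n - b) a \<le> 2 * e + (b - a)" if "1 \<le> a" "b < n"
  proof -
    have cX: "card X = n - b" unfolding X_def b_def by (subst card_Diff_subset) (auto simp: SR_def)
    have "X \<noteq> {}" using cX that by auto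
    moreover have "SL \<noteq> {}" using that unfolding a_def by auto
    moreover have "n \<le> card X + card SL + (b - a)" using cX unfolding a_def by linarith
    ultimately have "min (card X) (card SL) \<le> 2 * e + (b - a)" unfolding e_def
      by (intro ecount[OF g]) (auto simp: X_def SL_def)
    thus ?thesis using cX unfolding a_def by simp
  qed
  have ar: "1 \<le> card I \<and> 1 + min b (n - a) \<le> 5 * card I"
    by (rule arith2[OF aN bN nz nf i1 i2 i3])
  have "Ou \<subseteq> (\<lambda>i. (Inl i :: vert, Inr (\<pi> i) :: vert)) ` SL \<union> (Inr ` SR \<times> Inl ` ({..<n} - SL))"
  proof
    fix p assume p: "p \<in> Ou"
    then obtain u v where uv: "p = (u, v)" "(u, v) \<in> E" "u \<in> S" "v \<in> V - S"
      unfolding Ou_def out_edges_def by auto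
    show "p \<in> (\<lambda>i. (Inl i :: vert, Inr (\<pi> i) :: vert)) ` SL \<union> (Inr ` SR \<times> Inl ` ({..<n} - SL))"
    proof (cases "(u, v) \<in> B")
      case True
      then obtain j i where ji: "u = Inr j" "v = Inl i" "j < n" "i < n"
        using BU unfolding Lside_def Rside_def by blast
      thus ?thesis using uv unfolding SL_def SR_def by auto
    next
      case False
      hence "(u, v) \<in> matching n \<pi>" using uv unfolding E_def graph_of_def by auto
      then obtain i where "u = Inl i" "v = Inr (\<pi> i)" "i < n" unfolding matching_def by auto
      thus ?thesis using uv unfolding SL_def by auto
    qed
  qed
  hence "card Ou \<le> card ((\<lambda>i. (Inl i :: vert, Inr (\<pi> i) :: vert)) ` SL \<union> (Inr ` SR \<times> Inl ` ({..<n} - SL)))"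
    by (intro card_mono) (use fSL in auto)
  also have "\<dots> \<le> card ((\<lambda>i. (Inl i :: vert, Inr (\<pi> i) :: vert)) ` SL) + card ((Inr ` SR \<times> Inl ` ({..<n} - SL)) :: (vert \<times> vert) set)"
    by (rule card_Un_le)
  also have "\<dots> \<le> a + b * (n - a)"
  proof -
    have "card ((\<lambda>i. (Inl i :: vert, Inr (\<pi> i) :: vert)) ` SL) \<le> a" unfolding a_def by (rule card_image_le[OF fSL(1)])
    moreover have "card ((Inr ` SR \<times> Inl ` ({..<n} - SL)) :: (vert \<times> vert) set) = b * (n - a)"
    proof -
      have "card ({..<n} - SL) = n - a" unfolding a_def by (subst card_Diff_subset) (auto simp: SL_def)
      thus ?thesis unfolding card_cartesian_product b_def by (simp add: card_image)
    qed
    ultimately show ?thesis by linarith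
  qed
  also have "\<dots> \<le> n * (1 + min b (n - a))" by (rule arith1[OF aN bN])
  also have "\<dots> \<le> n * (5 * card I)" using ar by (intro mult_le_mono) auto
  finally show ?thesis using ar unfolding Ou_def I_def V_def E_def by simp
qed

lemma nat_real_bound:
  fixes p i n :: nat
  assumes "p \<le> n * (5 * i)"
  shows "real p \<le> 8 * real n * real i"
proof -
  have "real p \<le> real (n * (5 * i))" using assms by (simp only: of_nat_le_iff)
  also have "\<dots> = real n * (5 * real i)" by simp
  also have "\<dots> \<le> real n * (8 * real i)" by (intro mult_left_mono) auto
  finally show ?thesis by (simp add: mult_ac)
qed

lemma good_balanced:
  assumes bij: "bij_betw \<pi> {..<n} {..<n}" and BU: "B \<subseteq> Rside n \<times> Lside n" and g: "good n B"
  shows "balanced (8 * real n) (Lside n \<union> Rside n) (graph_of n \<pi> B)"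
  unfolding balanced_def
proof (intro conjI allI impI)
  show "strongly_connected (Lside n \<union> Rside n) (graph_of n \<pi> B)"
  proof (rule sc_from_in)
    fix S assume "S \<noteq> {}" "S \<subset> Lside n \<union> Rside n"
    from cut_bound[OF bij BU g this] show "in_edges (Lside n \<union> Rside n) (graph_of n \<pi> B) S \<noteq> {}" by auto
  qed
next
  fix S assume "S \<noteq> {} \<and> S \<subset> Lside n \<union> Rside n"
  hence c: "card (out_edges (Lside n \<union> Rside n) (graph_of n \<pi> B) S) \<le> n * (5 * card (in_edges (Lside n \<union> Rside n) (graph_of n \<pi> B) S))"
    using cut_bound[OF bij BU g] by blast
  thus "real (card (out_edges (Lside n \<union> Rside n) (graph_of n \<pi> B) S)) \<le> 8 * real n * real (card (in_edges (Lside n \<union> Rside n) (graph_of n \<pi> B) S))"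
    by (rule nat_real_bound)
qed


lemma count_avoid:
  assumes "finite U" "Z \<subseteq> U"
  shows "card {B \<in> Pow U. B \<inter> Z = {}} = 2 ^ (card U - card Z)"
proof -
  have "{B \<in> Pow U. B \<inter> Z = {}} = Pow (U - Z)" by auto
  thus ?thesis using assms by (simp add: card_Pow card_Diff_subset finite_subset)
qed

lemma prob_main:
  assumes bij: "bij_betw \<pi> {..<n} {..<n}" and n1: "n \<ge> 1" and big: "real n ^ 3 \<le> 2 ^ (n div 3)"
    "real (n+1)^2 * (real n ^ 3 / 2 ^ (n div 3)) \<le> 1 / real n"
  shows "measure_pmf.prob (pmf_of_set (Pow (Rside n \<times> Lside n)))
       {B. balanced (8 * real n) (Lside n \<union> Rside n) (graph_of n \<pi> B)} \<ge> 1 - 1 / real n"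
proof -
  define U where "U = Rside n \<times> Lside n"
  define A where "A = Pow U"
  define F where "F = {XY \<in> Pow {..<n} \<times> Pow {..<n}. cnd n (card (fst XY)) (card (snd XY))}"
  define Z where "Z = (\<lambda>XY. (Inr ` fst XY \<times> Inl ` snd XY :: (vert \<times> vert) set))"
  define G where "G = {B \<in> A. good n B}"
  have fU: "finite U" unfolding U_def Rside_def Lside_def by auto
  have cU: "card U = n * n" unfolding U_def Rside_def Lside_def card_cartesian_product by (simp add: card_image)
  have fA: "finite A" "A \<noteq> {}" unfolding A_def using fU by auto
  have cA: "card A = 2 ^ (n * n)" unfolding A_def using fU cU by (simp add: card_Pow)
  have fF: "finite F" unfolding F_def by auto
  have ZU: "Z XY \<subseteq> U" if "XY \<in> F" for XY
    using that unfolding Z_def F_def U_def Rside_def Lside_def by auto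
  have cZ: "card (Z XY) = card (fst XY) * card (snd XY)" for XY
    unfolding Z_def card_cartesian_product by (simp add: card_image)
  have GA: "G \<subseteq> A \<inter> {B. balanced (8 * real n) (Lside n \<union> Rside n) (graph_of n \<pi> B)}"
    unfolding G_def A_def U_def using good_balanced[OF bij] by auto
  have bad: "A - G \<subseteq> (\<Union>XY\<in>F. {B \<in> A. B \<inter> Z XY = {}})"
  proof
    fix B assume "B \<in> A - G"
    hence B: "B \<in> A" "\<not> good n B" unfolding G_def by auto
    then obtain X Y where "X \<subseteq> {..<n}" "Y \<subseteq> {..<n}" "cnd n (card X) (card Y)" "B \<inter> (Inr ` X \<times> Inl ` Y) = {}"
      unfolding good_def by blast
    thus "B \<in> (\<Union>XY\<in>F. {B \<in> A. B \<inter> Z XY = {}})" using B(1)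
      unfolding F_def Z_def by (intro UN_I[of "(X, Y)"]) auto
  qed
  have "card (A - G) \<le> card (\<Union>XY\<in>F. {B \<in> A. B \<inter> Z XY = {}})"
    by (rule card_mono[OF _ bad], rule finite_subset[of _ A]) (use fA in auto)
  also have "\<dots> \<le> (\<Sum>XY\<in>F. card {B \<in> A. B \<inter> Z XY = {}})" by (rule card_UN_le[OF fF])
  also have "\<dots> = (\<Sum>XY\<in>F. 2 ^ (n * n - card (fst XY) * card (snd XY)))"
  proof (rule sum.cong[OF refl])
    fix XY assume "XY \<in> F"
    show "card {B \<in> A. B \<inter> Z XY = {}} = 2 ^ (n * n - card (fst XY) * card (snd XY))"
      unfolding A_def using count_avoid[OF fU ZU[OF \<open>XY \<in> F\<close>]] cZ[of XY] cU by simp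
  qed
  finally have cbn: "card (A - G) \<le> (\<Sum>XY\<in>F. 2 ^ (n * n - card (fst XY) * card (snd XY)))" .
  have cb: "real (card (A - G)) \<le> (\<Sum>XY\<in>F. 2 ^ (n * n - card (fst XY) * card (snd XY)))"
  proof -
    have "real (card (A - G)) \<le> real (\<Sum>XY\<in>F. 2 ^ (n * n - card (fst XY) * card (snd XY)))"
      using cbn by (simp only: of_nat_le_iff)
    also have "real (\<Sum>XY\<in>F. 2 ^ (n * n - card (fst XY) * card (snd XY))) = (\<Sum>XY\<in>F. 2 ^ (n * n - card (fst XY) * card (snd XY)))"
      by (simp only: of_nat_sum of_nat_power of_nat_numeral)
    finally show ?thesis .
  qed
  have le: "card (fst XY) * card (snd XY) \<le> n * n" if "XY \<in> F" for XY
  proof -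
    have "card (fst XY) \<le> n" "card (snd XY) \<le> n" using that unfolding F_def
      by (auto dest!: card_mono[rotated] simp: )
    thus ?thesis by (intro mult_le_mono)
  qed
  have "real (card (A - G)) / real (card A) \<le> (\<Sum>XY\<in>F. 2 ^ (n * n - card (fst XY) * card (snd XY))) / 2 ^ (n * n)"
    using cb cA by (simp add: divide_right_mono)
  also have "\<dots> = (\<Sum>XY\<in>F. (1/2::real) ^ (card (fst XY) * card (snd XY)))"
    unfolding sum_divide_distrib
  proof (rule sum.cong[OF refl])
    fix XY assume "XY \<in> F"
    hence l: "card (fst XY) * card (snd XY) \<le> n * n" by (rule le)
    have "(2::real) ^ (n * n) = 2 ^ (n * n - card (fst XY) * card (snd XY)) * 2 ^ (card (fst XY) * card (snd XY))"
      using l by (simp add: power_add[symmetric])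
    thus "(2::real) ^ (n * n - card (fst XY) * card (snd XY)) / 2 ^ (n * n) = (1/2) ^ (card (fst XY) * card (snd XY))"
      by (simp add: power_one_over)
  qed
  also have "\<dots> = (\<Sum>XY\<in>Pow {..<n} \<times> Pow {..<n}. if cnd n (card (fst XY)) (card (snd XY)) then (1/2::real) ^ (card (fst XY) * card (snd XY)) else 0)"
    unfolding F_def by (rule sum.inter_filter) auto
  also have "\<dots> = (\<Sum>X\<in>Pow {..<n}. \<Sum>Y\<in>Pow {..<n}. (if cnd n (card X) (card Y) then (1/2::real) ^ (card X * card Y) else 0))"
    by (subst sum.cartesian_product) (simp add: case_prod_beta)
  also have "\<dots> \<le> real (n+1)^2 * (real n ^ 3 / 2 ^ (n div 3))" by (rule total_bound[OF big(1)])
  also have "\<dots> \<le> 1 / real n" by (rule big(2))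
  finally have fr: "real (card (A - G)) / real (card A) \<le> 1 / real n" .
  have GsA: "G \<subseteq> A" unfolding G_def by auto
  have cAG: "card A = card G + card (A - G)" using card_Diff_subset[OF finite_subset[OF GsA fA(1)] GsA] card_mono[OF fA(1) GsA] by simp
  hence "real (card G) / real (card A) = 1 - real (card (A - G)) / real (card A)"
  proof -
    have p: "real (card A) > 0" using fA by (simp add: card_gt_0_iff)
    have "real (card G) = real (card A) - real (card (A - G))" using cAG by simp
    thus ?thesis using p by (simp add: diff_divide_distrib)
  qed
  also have "\<dots> \<ge> 1 - 1 / real n" using fr by simp
  finally have "1 - 1 / real n \<le> real (card G) / real (card A)" .
  also have "\<dots> \<le> real (card (A \<inter> {B. balanced (8 * real n) (Lside n \<union> Rside n) (graph_of n \<pi> B)})) / real (card A)"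
    by (intro divide_right_mono of_nat_mono card_mono GA) (use fA in auto)
  also have "\<dots> = measure_pmf.prob (pmf_of_set A) {B. balanced (8 * real n) (Lside n \<union> Rside n) (graph_of n \<pi> B)}"
    using measure_pmf_of_set[OF fA(2,1)] by simp
  finally show ?thesis unfolding A_def U_def .
qed

theorem lemma7:
  "\<exists>n0::nat. \<forall>n\<ge>n0. \<forall>\<pi>. bij_betw \<pi> {..<n} {..<n} \<longrightarrow>
     measure_pmf.prob (pmf_of_set (Pow (Rside n \<times> Lside n)))
       {B. balanced (8 * real n) (Lside n \<union> Rside n) (graph_of n \<pi> B)}
     \<ge> 1 - 1 / real n"
proof -
  obtain N where N: "\<And>n. n \<ge> N \<Longrightarrow> real ((n+1)^6) \<le> 2 powr (real n / 3 - 1)"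
    using eventually_big unfolding eventually_at_top_linorder by blast
  show ?thesis
  proof (intro exI[of _ "max N 1"] allI impI)
    fix n :: nat and \<pi> :: "nat \<Rightarrow> nat"
    assume n: "max N 1 \<le> n" and bij: "bij_betw \<pi> {..<n} {..<n}"
    have h: "real ((n+1)^6) \<le> 2 powr (real n / 3 - 1)" "n \<ge> 1" using N n by auto
    from big_n[OF h] h(2) show "measure_pmf.prob (pmf_of_set (Pow (Rside n \<times> Lside n)))
       {B. balanced (8 * real n) (Lside n \<union> Rside n) (graph_of n \<pi> B)} \<ge> 1 - 1 / real n"
      by (intro prob_main[OF bij]) auto
  qed
qed

end
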